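(* (i) Let $0\le B<A\le 1$. Then $R_{\mathcal{S}^*_{Ne}}(\mathcal{S}^*[A,B])=\min\{1,\,2/(3A-B)\}$. In particular, if $1-B\le 3(1-A)$, then $\mathcal{S}^*[A,B]\subset\mathcal{S}^*_{Ne}$. (ii) Let $-1\le B<A\le 1$ with $B\le 0$. Then $R_{\mathcal{S}^*_{Ne}}(\mathcal{S}^*[A,B])=\min\{1,\,2/(3A-5B)\}$. In particular, if $3(1+A)\le 5(1+B)$, then $\mathcal{S}^*[A,B]\subset\mathcal{S}^*_{Ne}$.
   Context: $\mathbb{D}=\{|z|<1\}$, $\mathbb{D}_r=\{|z|<r\}$. $\mathcal{A}$ is the class of analytic $f$ on $\mathbb{D}$ with $f(0)=0$, $f'(0)=1$; for $f\in\mathcal{A}$ let $\mathcal{Q}_f(z)=zf'(z)/f(z)$. For analytic $F,G$ on $\mathbb{D}$, $F\prec G$ means $F=G\circ w$ for some analytic $w:\mathbb{D}\to\mathbb{D}$ with $w(0)=0$. For analytic $\varphi$ on $\mathbb{D}$, $\mathcal{S}^*(\varphi)=\{f\in\mathcal{A}:\mathcal{Q}_f\prec\varphi\}$. Let $\varphi_{Ne}(z)=1+z-z^3/3$ (univalent on $\mathbb{D}$), $\Omega_{Ne}=\varphi_{Ne}(\mathbb{D})$, and $\mathcal{S}^*_{Ne}=\mathcal{S}^*(\varphi_{Ne})$. For $\mathcal{G}\subset\mathcal{A}$, the $\mathcal{S}^*_{Ne}$-radius $R_{\mathcal{S}^*_{Ne}}(\mathcal{G})$ is the largest $\rho\in(0,1]$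 such that for every $f\in\mathcal{G}$ and every $0<r\le\rho$ the function $r^{-1}f(rz)$ belongs to $\mathcal{S}^*_{Ne}$; equivalently, the largest $\rho\in(0,1]$ with $\mathcal{Q}_f(\mathbb{D}_\rho)\subseteq\Omega_{Ne}$ for all $f\in\mathcal{G}$. For $-1\le B<A\le1$, the Janowski class is $\mathcal{S}^*[A,B]=\mathcal{S}^*\big(\frac{1+Az}{1+Bz}\big)$. *)

theory Defs
  imports "HOL-Analysis.Analysis"
begin

definition classA :: "(complex \<Rightarrow> complex) set" where
  "classA = {f. f holomorphic_on ball 0 1 \<and> f 0 = 0 \<and> deriv f 0 = 1}"

text \<open>Q_f(z) = z f'(z)/f(z); at z = 0 the removable value 1 (= lim, since f(0)=0, f'(0)=1).\<close>
definition Qf :: "(complex \<Rightarrow> complex) \<Rightarrow> complex \<Rightarrow> complex" where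
  "Qf f z = (if z = 0 then 1 else z * deriv f z / f z)"

definition subord :: "(complex \<Rightarrow> complex) \<Rightarrow> (complex \<Rightarrow> complex) \<Rightarrow> bool" where
  "subord F G \<longleftrightarrow> F holomorphic_on ball 0 1 \<and> G holomorphic_on ball 0 1 \<and>
     (\<exists>w. w holomorphic_on ball 0 1 \<and> w ` ball 0 1 \<subseteq> ball 0 1 \<and> w 0 = 0 \<and>
          (\<forall>z\<in>ball 0 1. F z = G (w z)))"

definition Sstar :: "(complex \<Rightarrow> complex) \<Rightarrow> (complex \<Rightarrow> complex) set" where
  "Sstar \<phi> = {f \<in> classA. subord (Qf f) \<phi>}"

definition phiNe :: "complex \<Rightarrow> complex" where
  "phiNe z = 1 + z - z ^ 3 / 3"

definition SNe :: "(complex \<Rightarrow> complex) set" where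
  "SNe = Sstar phiNe"

definition Janowski :: "real \<Rightarrow> real \<Rightarrow> (complex \<Rightarrow> complex) set" where
  "Janowski A B = Sstar (\<lambda>z. (1 + of_real A * z) / (1 + of_real B * z))"

definition dilate :: "(complex \<Rightarrow> complex) \<Rightarrow> real \<Rightarrow> complex \<Rightarrow> complex" where
  "dilate f r = (\<lambda>z. f (of_real r * z) / of_real r)"

definition SNe_radius :: "(complex \<Rightarrow> complex) set \<Rightarrow> real" where
  "SNe_radius G = (GREATEST \<rho>. 0 < \<rho> \<and> \<rho> \<le> 1 \<and>
       (\<forall>f\<in>G. \<forall>r. 0 < r \<and> r \<le> \<rho> \<longrightarrow> dilate f r \<in> SNe))"

end

theory Submission
  imports Defs "HOL-Complex_Analysis.Complex_Analysis"
begin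

lemma phiNe_Complex: "phiNe (Complex x y) = Complex (1 + x - (x^3 - 3*x*y^2)/3) (y - (3*x^2*y - y^3)/3)"
  by (simp add: phiNe_def complex_eq_iff power3_eq_cube power2_eq_square algebra_simps)

lemma phiNe_real:
  assumes "norm z < 1" "Im (phiNe z) = 0"
  shows "1/3 < Re (phiNe z) \<and> Re (phiNe z) < 5/3"
proof -
  obtain x y where z: "z = Complex x y" by (metis complex.exhaust)
  have n: "x^2 + y^2 < 1" using assms(1) z by (simp add: norm_complex_def)
  have "y * (1 - x^2 + y^2/3) = 0" using assms(2) unfolding z phiNe_Complex by (simp add: algebra_simps power2_eq_square power3_eq_cube)
  moreover have "1 - x^2 + y^2/3 > 0" using n zero_le_power2[of y] zero_le_power2[of x] by linarith
  ultimately have y: "y = 0" by simp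
  have x: "-1 < x" "x < 1" using n y abs_square_less_1[of x] by auto
  have "Re (phiNe z) = 1 + x - x^3/3" unfolding z phiNe_Complex y by simp
  moreover have "(x+1)^2*(2-x) > 0" using x by (intro mult_pos_pos) auto
  moreover have "(1-x)^2*(x+2) > 0" using x by (intro mult_pos_pos) auto
  ultimately show ?thesis by (simp add: power2_eq_square power3_eq_cube algebra_simps)
qed

lemma bnd_real:
  fixes x y d :: real
  assumes "x^2 + y^2 = 1" "0 \<le> d" "d \<le> 2/3"
  shows "(2/3 - d)^2 \<le> (2*x - 4*x^3/3 - d)^2 + (4*y^3/3)^2"
proof -
  have y2: "y^2 = 1 - x^2" using assms(1) by simp
  have "(4*y^3/3)^2 = 16/9 * (y^2)^3" by (simp add: power2_eq_square power3_eq_cube)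
  also have "\<dots> = 16/9 * (1-x^2)^3" using y2 by simp
  finally have e: "(4*y^3/3)^2 = 16/9 * (1-x^2)^3" .
  have xb: "-1 \<le> x" "x \<le> 1" using assms(1) abs_square_le_1[of x] zero_le_power2[of y] by auto
  have "(2*x - 4*x^3/3 - d)^2 + (4*y^3/3)^2 - (2/3 - d)^2
        = (4/3)*((1-x)*((1-3*d/2)*(1+x) + (d/2)*(1-x)*(5+4*x)))"
    unfolding e by (simp add: power2_eq_square power3_eq_cube field_simps)
  moreover have "0 \<le> (1-x)*((1-3*d/2)*(1+x) + (d/2)*(1-x)*(5+4*x))"
  proof -
    have "0 \<le> (1-3*d/2)*(1+x)" using xb assms by (intro mult_nonneg_nonneg) auto
    moreover have "0 \<le> (d/2)*(1-x)*(5+4*x)" using xb assms by (intro mult_nonneg_nonneg) auto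
    ultimately show ?thesis using xb by (intro mult_nonneg_nonneg) auto
  qed
  ultimately show ?thesis by linarith
qed

lemma boundary_far:
  assumes "norm u = 1"
  shows "2/3 - \<bar>c - 1\<bar> \<le> norm (phiNe u - complex_of_real c)"
proof (cases "2/3 - \<bar>c - 1\<bar> \<le> 0")
  case True then show ?thesis by (smt (verit) norm_ge_zero)
next
  case False
  obtain x y where u: "u = Complex x y" by (metis complex.exhaust)
  have n: "x^2 + y^2 = 1" using assms u by (simp add: norm_complex_def)
  have y2: "y^2 = 1 - x^2" using n by simp
  have r: "1 + x - (x^3 - 3*x*y^2)/3 - c = 2*x - 4*x^3/3 - (c-1)"
    unfolding y2 by (simp add: power2_eq_square power3_eq_cube field_simps)
  have i: "y - (3*x^2*y - y^3)/3 = 4*y^3/3"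
  proof -
    have "y^3 = y * y^2" by (simp add: power3_eq_cube power2_eq_square)
    then have h: "y^3 = y * (1 - x^2)" using y2 by simp
    show ?thesis unfolding h by (simp add: field_simps)
  qed
  have e: "phiNe u - complex_of_real c = Complex (2*x - 4*x^3/3 - (c-1)) (4*y^3/3)"
    unfolding u phiNe_Complex using r i by (simp add: complex_eq_iff)
  have sq: "(2/3 - \<bar>c-1\<bar>)^2 \<le> (2*x - 4*x^3/3 - (c-1))^2 + (4*y^3/3)^2"
  proof (cases "c - 1 \<ge> 0")
    case True then show ?thesis using bnd_real[OF n, of "c-1"] False by auto
  next
    case F: False
    have n': "(-x)^2 + (-y)^2 = 1" using n by simp
    have "(2/3 - (1-c))^2 \<le> (2*(-x) - 4*(-x)^3/3 - (1-c))^2 + (4*(-y)^3/3)^2"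
      using bnd_real[OF n', of "1-c"] False F by auto
    then show ?thesis using F by (simp add: power2_eq_square power3_eq_cube algebra_simps)
  qed
  have "norm (phiNe u - complex_of_real c) = sqrt ((2*x - 4*x^3/3 - (c-1))^2 + (4*y^3/3)^2)"
    unfolding e by (simp add: norm_complex_def)
  moreover have "2/3 - \<bar>c-1\<bar> = sqrt ((2/3 - \<bar>c-1\<bar>)^2)" using False by simp
  ultimately show ?thesis using real_sqrt_le_mono[OF sq] by simp
qed

lemma phiNe_holo[holomorphic_intros]: "phiNe holomorphic_on S"
  unfolding phiNe_def by (intro holomorphic_intros) auto

lemma phiNe_cont: "continuous_on S phiNe"
  unfolding phiNe_def by (intro continuous_intros) auto

lemma phiNe_inj: "inj_on phiNe (ball 0 1)"
proof (rule inj_onI)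
  fix a b :: complex assume a: "a \<in> ball 0 1" and b: "b \<in> ball 0 1" and e: "phiNe a = phiNe b"
  have fac: "phiNe a - phiNe b = (a - b) * (1 - (a^2 + a*b + b^2)/3)"
    by (simp add: phiNe_def power2_eq_square power3_eq_cube field_simps)
  show "a = b"
  proof (rule ccontr)
    assume "a \<noteq> b"
    with fac e have "a^2 + a*b + b^2 = 3" by auto
    moreover have "norm (a^2 + a*b + b^2) < 3"
    proof -
      have na: "norm a < 1" and nb: "norm b < 1" using a b by auto
      have "norm (a^2 + a*b + b^2) \<le> norm a ^ 2 + norm a * norm b + norm b ^ 2"
      proof -
        have "norm (a^2 + a*b + b^2) \<le> norm (a^2 + a*b) + norm (b^2)" by (rule norm_triangle_ineq)
        also have "\<dots> \<le> norm (a^2) + norm (a*b) + norm (b^2)" using norm_triangle_ineq by auto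
        finally show ?thesis by (simp add: norm_mult norm_power)
      qed
      also have "\<dots> < 3"
      proof -
        have "norm a ^ 2 < 1" using na by (simp add: abs_square_less_1)
        moreover have "norm b ^ 2 < 1" using nb by (simp add: abs_square_less_1)
        moreover have "norm a * norm b < 1" using mult_strict_mono'[OF na nb norm_ge_zero norm_ge_zero] by simp
        ultimately show ?thesis by linarith
      qed
      finally show ?thesis .
    qed
    ultimately show False by simp
  qed
qed

lemma phiNe_open: "open (phiNe ` ball 0 1)"
  by (rule open_mapping_thm3[OF phiNe_holo open_ball phiNe_inj])

lemma cover:
  assumes S: "connected S" and one: "1 \<in> S"
    and nb: "\<And>s u. s \<in> S \<Longrightarrow> norm u = 1 \<Longrightarrow> phiNe u \<noteq> s"
  shows "S \<subseteq> phiNe ` ball 0 1"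
proof (rule ccontr)
  let ?T = "phiNe ` ball 0 1"
  assume "\<not> S \<subseteq> ?T"
  then have d: "S - ?T \<noteq> {}" by blast
  have "phiNe 0 = 1" by (simp add: phiNe_def)
  then have "1 \<in> ?T" by (metis centre_in_ball imageI zero_less_one)
  then have i: "S \<inter> ?T \<noteq> {}" using one by blast
  obtain p where p: "p \<in> S" "p \<in> frontier ?T" using connected_Int_frontier[OF S i d] by blast
  have cl: "closure ?T \<subseteq> phiNe ` cball 0 1"
  proof (rule closure_minimal)
    show "?T \<subseteq> phiNe ` cball 0 1" by (intro image_mono ball_subset_cball)
    show "closed (phiNe ` cball 0 1)"
      by (intro compact_imp_closed compact_continuous_image phiNe_cont compact_cball)
  qed
  have "p \<in> closure ?T" "p \<notin> ?T" using p(2) phiNe_open by (auto simp: frontier_def interior_open)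
  then obtain u where u: "u \<in> cball 0 1" "p = phiNe u" "u \<notin> ball 0 1" using cl by blast
  then have "norm u = 1" by auto
  then show False using nb[OF p(1)] u by blast
qed

definition JJ :: "real \<Rightarrow> real \<Rightarrow> complex \<Rightarrow> complex" where
  "JJ A B = (\<lambda>z. (1 + of_real A * z) / (1 + of_real B * z))"

lemma den_nz:
  assumes "\<bar>B\<bar> * r \<le> 1" "norm z < r"
  shows "1 + complex_of_real B * z \<noteq> 0"
proof
  assume "1 + complex_of_real B * z = 0"
  then have "norm (complex_of_real B * z) = 1" by (metis add_eq_0_iff norm_minus_cancel norm_one)
  moreover have "norm (complex_of_real B * z) < 1"
  proof (cases "B = 0")
    case False
    then have "norm (complex_of_real B * z) = \<bar>B\<bar> * norm z" by (simp add: norm_mult)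
    also have "\<dots> < \<bar>B\<bar> * r" using False assms by simp
    finally show ?thesis using assms by linarith
  qed simp
  ultimately show False by simp
qed

lemma canc: "(N::real) \<noteq> 0 \<Longrightarrow> a*(r*N)/(N*Q) = a*r/Q"
  by (cases "Q = 0") (simp_all add: field_simps)

lemma mob:
  fixes A B r :: real and z :: complex
  assumes r: "0 < r" and Br: "\<bar>B\<bar> * r < 1" and z: "norm z < r" and AB: "B < A"
  shows "norm (JJ A B z - of_real ((1 - A*B*r^2)/(1 - B^2*r^2))) < (A-B)*r/(1 - B^2*r^2)"
proof -
  have nz: "1 + complex_of_real B * z \<noteq> 0" using den_nz[of B r z] Br z by linarith
  have q: "0 < 1 - B^2*r^2"
  proof -
    have "\<bar>B*r\<bar> < 1" using Br r by (simp add: abs_mult)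
    then have "(B*r)^2 < 1" by (simp add: abs_square_less_1)
    then show ?thesis by (simp add: power_mult_distrib)
  qed
  have q': "complex_of_real (1 - B^2*r^2) \<noteq> 0" using q by (simp only: of_real_eq_0_iff)
  have eq: "JJ A B z - of_real ((1 - A*B*r^2)/(1 - B^2*r^2))
      = of_real (A-B) * (z + of_real (B*r^2)) / ((1 + of_real B * z) * of_real (1 - B^2*r^2))"
  proof -
    have "JJ A B z - of_real ((1 - A*B*r^2)/(1 - B^2*r^2))
       = (1 + of_real A * z) / (1 + of_real B * z) - of_real (1 - A*B*r^2) / of_real (1 - B^2*r^2)"
      unfolding JJ_def by simp
    also have "\<dots> = ((1 + of_real A * z) * of_real (1 - B^2*r^2) - (1 + of_real B * z) * of_real (1 - A*B*r^2))
          / ((1 + of_real B * z) * of_real (1 - B^2*r^2))"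
      using nz q' by (subst diff_frac_eq) auto
    also have "(1 + of_real A * z) * of_real (1 - B^2*r^2) - (1 + of_real B * z) * of_real (1 - A*B*r^2)
       = of_real (A-B) * (z + of_real (B*r^2))"
      by (simp add: algebra_simps power2_eq_square)
    finally show ?thesis .
  qed
  have key: "norm (z + of_real (B*r^2)) < r * norm (1 + of_real B * z)"
  proof -
    obtain x y where zz: "z = Complex x y" by (metis complex.exhaust)
    have n2: "x^2 + y^2 < r^2" using z zz r
    proof -
      have "norm z ^ 2 < r ^ 2" using z by (intro power_strict_mono) auto
      then show ?thesis unfolding zz cmod_power2 by simp
    qed
    have l: "(norm (z + of_real (B*r^2)))^2 = (x + B*r^2)^2 + y^2" unfolding zz cmod_power2 by simp
    have rr: "(r * norm (1 + of_real B * z))^2 = r^2 * ((1 + B*x)^2 + (B*y)^2)"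
      unfolding zz power_mult_distrib cmod_power2 by (simp add: power_mult_distrib)
    have "(x + B*r^2)^2 + y^2 - r^2 * ((1 + B*x)^2 + (B*y)^2) = (x^2+y^2-r^2)*(1 - B^2*r^2)"
      by (simp add: power2_eq_square algebra_simps)
    moreover have "(x^2+y^2-r^2)*(1 - B^2*r^2) < 0" using n2 q by (intro mult_neg_pos) auto
    ultimately have "(norm (z + of_real (B*r^2)))^2 < (r * norm (1 + of_real B * z))^2"
      using l rr by linarith
    then show ?thesis by (rule power_less_imp_less_base) (use r in auto)
  qed
  have "norm (JJ A B z - of_real ((1 - A*B*r^2)/(1 - B^2*r^2)))
      = (A-B) * norm (z + of_real (B*r^2)) / (norm (1 + of_real B * z) * (1 - B^2*r^2))"
    unfolding eq norm_divide norm_mult norm_of_real using AB q by simp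
  also have "\<dots> < (A-B) * (r * norm (1 + of_real B * z)) / (norm (1 + of_real B * z) * (1 - B^2*r^2))"
    using key AB q nz by (intro divide_strict_right_mono mult_strict_left_mono) auto
  also have "\<dots> = (A-B)*r/(1 - B^2*r^2)" by (rule canc) (use nz in simp)
  finally show ?thesis .
qed

lemma rz_ball: "0 < r \<Longrightarrow> r \<le> 1 \<Longrightarrow> z \<in> ball 0 1 \<Longrightarrow> complex_of_real r * z \<in> ball 0 1"
proof -
  assume a: "0 < r" "r \<le> 1" "z \<in> ball 0 1"
  have "norm (complex_of_real r * z) = r * norm z" using a by (simp add: norm_mult)
  also have "\<dots> < 1" using a by (smt (verit, best) mem_ball_0 mult_left_le_one_le mult_less_cancel_left1 norm_ge_zero)
  finally show ?thesis by simp
qed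

lemma dilate_deriv:
  assumes hf: "f holomorphic_on ball 0 1" and r: "0 < r" "r \<le> 1" and z: "z \<in> ball 0 1"
  shows "(dilate f r has_field_derivative deriv f (of_real r * z)) (at z)"
proof -
  have rz: "of_real r * z \<in> ball 0 1" using rz_ball r z by blast
  have fd: "(f has_field_derivative deriv f (of_real r * z)) (at (of_real r * z))"
    using hf rz by (meson DERIV_deriv_iff_field_differentiable holomorphic_on_imp_differentiable_at open_ball)
  have "((\<lambda>z. f (of_real r * z)) has_field_derivative deriv f (of_real r * z) * of_real r) (at z)"
  proof (rule DERIV_chain2[where g="\<lambda>z. of_real r * z"])
    show "(f has_field_derivative deriv f (of_real r * z)) (at (of_real r * z))" by (rule fd)
    show "((\<lambda>z. of_real r * z) has_field_derivative of_real r) (at z)" by (rule DERIV_cmult_Id)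
  qed
  from DERIV_cdivide[OF this, of "of_real r"] show ?thesis
    using r unfolding dilate_def by simp
qed

lemma dilate_holo:
  assumes hf: "f holomorphic_on ball 0 1" and r: "0 < r" "r \<le> 1"
  shows "dilate f r holomorphic_on ball 0 1"
  using dilate_deriv[OF assms] holomorphic_on_open open_ball by blast

lemma deriv_dilate:
  assumes hf: "f holomorphic_on ball 0 1" and r: "0 < r" "r \<le> 1" and z: "z \<in> ball 0 1"
  shows "deriv (dilate f r) z = deriv f (of_real r * z)"
  using DERIV_imp_deriv[OF dilate_deriv[OF assms]] .

lemma dilate_classA:
  assumes "f \<in> classA" "0 < r" "r \<le> 1"
  shows "dilate f r \<in> classA"
  using assms deriv_dilate[of f r 0] dilate_holo[of f r] unfolding classA_def
  by (auto simp: dilate_def)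

lemma Qf_dilate:
  assumes hf: "f holomorphic_on ball 0 1" and r: "0 < r" "r \<le> 1" and z: "z \<in> ball 0 1"
  shows "Qf (dilate f r) z = Qf f (of_real r * z)"
  using r deriv_dilate[OF assms] unfolding Qf_def dilate_def
  by (cases "z = 0") (auto simp: field_simps)

lemma Janowski_JJ: "Janowski A B = Sstar (JJ A B)"
  unfolding Janowski_def JJ_def ..

lemma JJ_cont: "\<bar>B\<bar> * r \<le> 1 \<Longrightarrow> continuous_on (ball 0 r) (JJ A B)"
  unfolding JJ_def by (intro continuous_intros) (use den_nz in auto)

lemma pos:
  assumes f: "f \<in> Janowski A B" and r: "0 < r" "r \<le> 1" and Br: "\<bar>B\<bar> * r < 1" and AB: "B < A"
    and cond: "(A-B)*r/(1 - B^2*r^2) \<le> 2/3 - \<bar>(1 - A*B*r^2)/(1 - B^2*r^2) - 1\<bar>"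
  shows "dilate f r \<in> SNe"
proof -
  let ?c = "(1 - A*B*r^2)/(1 - B^2*r^2)"
  let ?R = "(A-B)*r/(1 - B^2*r^2)"
  have fA: "f \<in> classA" and sub: "subord (Qf f) (JJ A B)" using f unfolding Janowski_JJ Sstar_def by auto
  have hf: "f holomorphic_on ball 0 1" using fA unfolding classA_def by auto
  have hQ: "Qf f holomorphic_on ball 0 1" using sub unfolding subord_def by auto
  obtain w0 where w0: "w0 holomorphic_on ball 0 1" "w0 ` ball 0 1 \<subseteq> ball 0 1" "w0 0 = 0"
      "\<And>z. z \<in> ball 0 1 \<Longrightarrow> Qf f z = JJ A B (w0 z)"
    using sub unfolding subord_def by blast
  define g where "g = dilate f r"
  have gA: "g \<in> classA" unfolding g_def by (rule dilate_classA[OF fA r])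
  have Qg: "Qf g z = Qf f (of_real r * z)" if "z \<in> ball 0 1" for z
    unfolding g_def by (rule Qf_dilate[OF hf r that])
  have hQg: "Qf g holomorphic_on ball 0 1"
  proof (rule holomorphic_transform[OF _ Qg[symmetric]])
    show "(\<lambda>z. Qf f (of_real r * z)) holomorphic_on ball 0 1"
      by (rule holomorphic_on_compose_gen[OF _ hQ, unfolded o_def])
         (auto intro!: holomorphic_intros rz_ball r)
  qed
  have inS: "Qf g z \<in> JJ A B ` ball 0 r" if z: "z \<in> ball 0 1" for z
  proof -
    have rz: "of_real r * z \<in> ball 0 1" using rz_ball r z by blast
    have "norm (w0 (of_real r * z)) \<le> norm (of_real r * z)"
      using rz w0 by (intro Schwarz_Lemma(1)) (auto simp: image_subset_iff)
    also have "\<dots> < r" using z r by (simp add: norm_mult)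
    finally have "w0 (of_real r * z) \<in> ball 0 r" by simp
    moreover have "Qf g z = JJ A B (w0 (of_real r * z))" using Qg[OF z] w0(4)[OF rz] by simp
    ultimately show ?thesis by blast
  qed
  have Ssub: "JJ A B ` ball 0 r \<subseteq> phiNe ` ball 0 1"
  proof (rule cover)
    show "connected (JJ A B ` ball 0 r)"
      using JJ_cont[of B r A] Br by (intro connected_continuous_image) auto
    show "1 \<in> JJ A B ` ball 0 r" using r by (intro image_eqI[of _ _ 0]) (auto simp: JJ_def)
    fix s u :: complex assume s: "s \<in> JJ A B ` ball 0 r" and u: "norm u = 1"
    then obtain \<zeta> where \<zeta>: "\<zeta> \<in> ball 0 r" "s = JJ A B \<zeta>" by blast
    have "norm (s - of_real ?c) < ?R" using mob[OF r(1) Br _ AB, of \<zeta>] \<zeta> by simp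
    also have "\<dots> \<le> norm (phiNe u - of_real ?c)" using cond boundary_far[OF u, of ?c] by linarith
    finally show "phiNe u \<noteq> s" by auto
  qed
  obtain h where h: "h holomorphic_on (phiNe ` ball 0 1)" "\<And>z. z \<in> ball 0 1 \<Longrightarrow> h (phiNe z) = z"
    using holomorphic_has_inverse[OF phiNe_holo open_ball phiNe_inj] by metis
  have QgT: "Qf g ` ball 0 1 \<subseteq> phiNe ` ball 0 1" using inS Ssub by blast
  define w where "w = h \<circ> Qf g"
  have hw: "w holomorphic_on ball 0 1" unfolding w_def
    by (rule holomorphic_on_compose_gen[OF hQg h(1) QgT])
  have wz: "w z \<in> ball 0 1 \<and> Qf g z = phiNe (w z)" if z: "z \<in> ball 0 1" for z
  proof -
    obtain u where u: "u \<in> ball 0 1" "Qf g z = phiNe u" using QgT z by blast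
    then show ?thesis unfolding w_def using h(2)[OF u(1)] by simp
  qed
  have "phiNe 0 = 1" by (simp add: phiNe_def)
  then have w0': "w 0 = 0" unfolding w_def using h(2)[of 0] by (simp add: Qf_def)
  have "subord (Qf g) phiNe" unfolding subord_def
    using hQg phiNe_holo hw wz w0' by blast
  then show ?thesis using gA unfolding g_def SNe_def Sstar_def by simp
qed

lemma JJ_holo: "\<bar>B\<bar> \<le> 1 \<Longrightarrow> JJ A B holomorphic_on ball 0 1"
  unfolding JJ_def by (intro holomorphic_intros) (use den_nz[of B 1] in auto)

lemma q1: "(z::complex) \<noteq> 0 \<Longrightarrow> z * (exp h + z * (exp h * k)) / (z * exp h) = 1 + z * k"
  by (simp add: field_simps)

lemma q1': "(exp h + (z::complex) * (exp h * k)) / exp h = 1 + z * k"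
  by (simp add: field_simps)

lemma q2: "1 + complex_of_real B * z \<noteq> 0 \<Longrightarrow>
  1 + z * (complex_of_real (A - B) / (1 + complex_of_real B * z)) = (1 + complex_of_real A * z) / (1 + complex_of_real B * z)"
  by (simp add: field_simps)

lemma extremal:
  assumes B: "\<bar>B\<bar> \<le> 1"
  obtains f where "f \<in> Janowski A B" "f holomorphic_on ball 0 1" "\<And>z. z \<in> ball 0 1 \<Longrightarrow> Qf f z = JJ A B z"
proof -
  define k where "k = (\<lambda>z::complex. of_real (A - B) / (1 + of_real B * z))"
  have nz: "1 + of_real B * z \<noteq> 0" if "z \<in> ball 0 1" for z :: complex using den_nz[of B 1 z] B that by auto
  have hk: "k holomorphic_on ball 0 1" unfolding k_def by (intro holomorphic_intros) (use nz in auto)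
  obtain H0 where H0: "\<And>x. x \<in> ball 0 1 \<Longrightarrow> (H0 has_field_derivative k x) (at x within ball 0 1)"
    using holomorphic_convex_primitive'[OF convex_ball open_ball hk] by metis
  define H where "H = (\<lambda>z. H0 z - H0 0)"
  have dH: "(H has_field_derivative k x) (at x)" if "x \<in> ball 0 1" for x
  proof -
    have "(H0 has_field_derivative k x) (at x)" using H0[OF that] that at_within_open[of x "ball 0 1"] by simp
    from DERIV_diff[OF this DERIV_const[of "H0 0"]] show ?thesis unfolding H_def by simp
  qed
  define f where "f = (\<lambda>z. z * exp (H z))"
  have df: "(f has_field_derivative exp (H z) + z * (exp (H z) * k z)) (at z)" if "z \<in> ball 0 1" for z
  proof -
    have e: "((\<lambda>z. exp (H z)) has_field_derivative exp (H z) * k z) (at z)"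
      by (rule DERIV_fun_exp[OF dH[OF that]])
    from DERIV_mult[OF DERIV_ident e] show ?thesis unfolding f_def by (simp add: algebra_simps)
  qed
  have hf: "f holomorphic_on ball 0 1" using df holomorphic_on_open open_ball by blast
  have Qeq: "Qf f z = JJ A B z" if z: "z \<in> ball 0 1" for z
  proof (cases "z = 0")
    case True then show ?thesis by (simp add: Qf_def JJ_def)
  next
    case False
    have "deriv f z = exp (H z) + z * (exp (H z) * k z)" using DERIV_imp_deriv[OF df[OF z]] .
    then have "Qf f z = 1 + z * k z" using False unfolding Qf_def f_def by (simp add: q1 q1')
    also have "\<dots> = JJ A B z" using nz[OF z] unfolding k_def JJ_def by (rule q2)
    finally show ?thesis .
  qed
  have f0: "f 0 = 0" unfolding f_def by simp
  have "deriv f 0 = 1" using DERIV_imp_deriv[OF df[of 0]] by (simp add: H_def)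
  then have fA: "f \<in> classA" using hf f0 unfolding classA_def by simp
  have hQ: "Qf f holomorphic_on ball 0 1"
    by (rule holomorphic_transform[OF JJ_holo[OF B]]) (simp add: Qeq)
  have "subord (Qf f) (JJ A B)" unfolding subord_def
    using hQ JJ_holo[OF B] Qeq by (intro conjI exI[of _ id]) auto
  then have "f \<in> Janowski A B" using fA unfolding Janowski_JJ Sstar_def by simp
  then show ?thesis using that hf Qeq by blast
qed

lemma negative:
  assumes hf: "f holomorphic_on ball 0 1" and Qeq: "\<And>z. z \<in> ball 0 1 \<Longrightarrow> Qf f z = JJ A B z"
    and r: "0 < r" "r \<le> 1" and z0: "z0 \<in> ball 0 1"
    and v: "JJ A B (of_real r * z0) = of_real v" "v \<le> 1/3 \<or> 5/3 \<le> v"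
  shows "dilate f r \<notin> SNe"
proof
  assume "dilate f r \<in> SNe"
  then have "subord (Qf (dilate f r)) phiNe" unfolding SNe_def Sstar_def by simp
  then obtain w where w: "w ` ball 0 1 \<subseteq> ball 0 1" "\<And>z. z \<in> ball 0 1 \<Longrightarrow> Qf (dilate f r) z = phiNe (w z)"
    unfolding subord_def by blast
  have "Qf (dilate f r) z0 = of_real v"
    using Qf_dilate[OF hf r z0] Qeq[OF rz_ball[OF r z0]] v(1) by simp
  then have e: "phiNe (w z0) = of_real v" using w(2)[OF z0] by simp
  have "norm (w z0) < 1" using w(1) z0 by (auto simp: image_subset_iff)
  from phiNe_real[OF this] e v(2) show False by simp
qed

lemma dilate_one: "dilate f 1 = f"
  unfolding dilate_def by simp

lemma JJ_real: "1 + B*t \<noteq> 0 \<Longrightarrow> JJ A B (of_real t) = of_real ((1 + A*t)/(1 + B*t))"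
  unfolding JJ_def by simp

lemma radius_generic:
  assumes rho: "0 < \<rho>"
    and good: "\<And>f r. f \<in> G \<Longrightarrow> 0 < r \<Longrightarrow> r \<le> min 1 \<rho> \<Longrightarrow> dilate f r \<in> SNe"
    and bad: "\<And>r. \<rho> < r \<Longrightarrow> r \<le> 1 \<Longrightarrow> \<exists>f\<in>G. dilate f r \<notin> SNe"
  shows "SNe_radius G = min 1 \<rho>"
  unfolding SNe_radius_def
proof (rule Greatest_equality)
  show "0 < min 1 \<rho> \<and> min 1 \<rho> \<le> 1 \<and> (\<forall>f\<in>G. \<forall>r. 0 < r \<and> r \<le> min 1 \<rho> \<longrightarrow> dilate f r \<in> SNe)"
    using rho good by auto
  fix y assume y: "0 < y \<and> y \<le> 1 \<and> (\<forall>f\<in>G. \<forall>r. 0 < r \<and> r \<le> y \<longrightarrow> dilate f r \<in> SNe)"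
  show "y \<le> min 1 \<rho>"
  proof (rule ccontr)
    assume "\<not> y \<le> min 1 \<rho>"
    then have "\<rho> < y" using y by auto
    then obtain f where "f \<in> G" "dilate f y \<notin> SNe" using bad y by blast
    then show False using y by auto
  qed
qed

lemma good1:
  assumes B0: "0 \<le> B" and AB: "B < A" and A1: "A \<le> 1"
    and f: "f \<in> Janowski A B" and r: "0 < r" "r \<le> min 1 (2 / (3 * A - B))"
  shows "dilate f r \<in> SNe"
proof -
  have d: "0 < 3 * A - B" using B0 AB by linarith
  have r1: "r \<le> 1" using r by simp
  have rA: "r * (3*A - B) \<le> 2" using r d by (simp add: pos_le_divide_eq)
  have Br1: "B * r \<le> B" using B0 r1 by (simp add: mult_left_le)
  have Br: "\<bar>B\<bar> * r < 1" using Br1 B0 AB A1 by simp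
  have Brn: "0 \<le> B * r" using B0 r by simp
  let ?Q = "1 - B^2*r^2"
  have Q: "0 < ?Q"
  proof -
    have "(B*r)^2 < 1" using Br Brn B0 by (simp add: abs_square_less_1)
    then show ?thesis by (simp add: power_mult_distrib)
  qed
  have e: "(1 - A*B*r^2)/?Q - 1 = -(B*(A-B)*r^2)/?Q" using Q by (simp add: field_simps power2_eq_square)
  have nn: "0 \<le> B*(A-B)*r^2" using B0 AB by simp
  have ab: "\<bar>(1 - A*B*r^2)/?Q - 1\<bar> = B*(A-B)*r^2/?Q" unfolding e using nn Q by simp
  have poly: "(A-B)*r + B*(A-B)*r^2 \<le> 2/3 * ?Q"
  proof -
    have "2/3 * ?Q - ((A-B)*r + B*(A-B)*r^2) = (1 + B*r) * (2 - r*(3*A - B)) / 3"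
      by (simp add: algebra_simps power2_eq_square)
    moreover have "0 \<le> (1 + B*r) * (2 - r*(3*A - B))" using Brn rA by simp
    ultimately show ?thesis by linarith
  qed
  have "(A-B)*r/?Q + B*(A-B)*r^2/?Q \<le> 2/3"
    using poly Q by (simp add: add_divide_distrib[symmetric] pos_divide_le_eq)
  then have cond: "(A-B)*r/?Q \<le> 2/3 - \<bar>(1 - A*B*r^2)/?Q - 1\<bar>" unfolding ab by linarith
  show ?thesis by (rule pos[OF f r(1) r1 Br AB cond])
qed

lemma case1:
  assumes B0: "0 \<le> B" and AB: "B < A" and A1: "A \<le> 1"
  shows "SNe_radius (Janowski A B) = min 1 (2 / (3 * A - B))"
proof (rule radius_generic)
  define \<rho> where "\<rho> = 2 / (3 * A - B)"
  have d: "0 < 3 * A - B" using B0 AB by linarith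
  show "0 < 2 / (3 * A - B)" using d by simp
  fix f r assume "f \<in> Janowski A B" "0 < r" "r \<le> min 1 (2 / (3 * A - B))"
  then show "dilate f r \<in> SNe" using good1 assms by blast
next
  have d: "0 < 3 * A - B" using B0 AB by linarith
  fix r assume r: "2 / (3 * A - B) < r" "r \<le> 1"
  define \<rho> where "\<rho> = 2 / (3 * A - B)"
  have \<rho>: "0 < \<rho>" "\<rho> < r" "\<rho> * (3*A - B) = 2" using d r unfolding \<rho>_def by (auto simp: field_simps)
  have Bb: "\<bar>B\<bar> \<le> 1" using B0 AB A1 by simp
  obtain f where f: "f \<in> Janowski A B" "f holomorphic_on ball 0 1" "\<And>z. z \<in> ball 0 1 \<Longrightarrow> Qf f z = JJ A B z"
    using extremal[OF Bb] by blast
  have rp: "0 < r" using \<rho> by simp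
  define z0 where "z0 = - complex_of_real (\<rho> / r)"
  have "norm z0 = \<rho> / r" unfolding z0_def norm_minus_cancel norm_of_real using \<rho> by simp
  then have z0: "z0 \<in> ball 0 1" using \<rho> by simp
  have rz: "complex_of_real r * z0 = of_real (-\<rho>)" unfolding z0_def using rp by simp
  have Bp: "B * \<rho> < 1"
  proof -
    have "B * \<rho> \<le> B * r" using B0 \<rho> by (simp add: mult_left_mono)
    also have "\<dots> \<le> B" using B0 r by (simp add: mult_left_le)
    finally show ?thesis using AB A1 by simp
  qed
  have v: "(1 + A*(-\<rho>))/(1 + B*(-\<rho>)) = 1/3"
    using Bp \<rho>(3) by (simp add: field_simps)
  have "JJ A B (complex_of_real r * z0) = of_real (1/3)"
  proof -
    have j: "JJ A B (of_real (-\<rho>)) = of_real ((1 + A*(-\<rho>))/(1 + B*(-\<rho>)))"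
      by (rule JJ_real) (use Bp in simp)
    show ?thesis unfolding rz j v ..
  qed
  from negative[OF f(2) f(3) rp r(2) z0 this] f(1) show "\<exists>f\<in>Janowski A B. dilate f r \<notin> SNe" by auto
qed

lemma good2:
  assumes Bm: "-1 \<le> B" and AB: "B < A" and A1: "A \<le> 1" and B0: "B \<le> 0"
    and f: "f \<in> Janowski A B" and r: "0 < r" "r \<le> min 1 (2 / (3 * A - 5 * B))"
  shows "dilate f r \<in> SNe"
proof -
  have d: "0 < 3 * A - 5 * B" using B0 AB by linarith
  have r1: "r \<le> 1" using r by simp
  have rA: "r * (3*A - 5*B) \<le> 2" using r d by (simp add: pos_le_divide_eq)
  have rAB: "0 < r * (A - B)" using r AB by simp
  have Brn: "B * r \<le> 0" using B0 r by (simp add: mult_nonpos_nonneg)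
  have Br': "- (B * r) < 1" using rA rAB by (simp add: algebra_simps)
  have Br: "\<bar>B\<bar> * r < 1" using Br' B0 by (simp add: abs_if)
  let ?Q = "1 - B^2*r^2"
  have Q: "0 < ?Q"
  proof -
    have "\<bar>B*r\<bar> < 1" using Br r by (simp add: abs_mult)
    then have "(B*r)^2 < 1" by (simp add: abs_square_less_1)
    then show ?thesis by (simp add: power_mult_distrib)
  qed
  have e: "(1 - A*B*r^2)/?Q - 1 = (-B*(A-B)*r^2)/?Q" using Q by (simp add: field_simps power2_eq_square)
  have nn: "0 \<le> -B*(A-B)*r^2" using B0 AB by (intro mult_nonneg_nonneg) auto
  have ab: "\<bar>(1 - A*B*r^2)/?Q - 1\<bar> = -B*(A-B)*r^2/?Q" unfolding e using nn Q by simp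
  have poly: "(A-B)*r + -B*(A-B)*r^2 \<le> 2/3 * ?Q"
  proof -
    have "2/3 * ?Q - ((A-B)*r + -B*(A-B)*r^2) = (1 - B*r) * (2 - r*(3*A - 5*B)) / 3"
      by (simp add: algebra_simps power2_eq_square)
    moreover have "0 \<le> (1 - B*r) * (2 - r*(3*A - 5*B))" using Brn rA by simp
    ultimately show ?thesis by linarith
  qed
  have "((A-B)*r + -B*(A-B)*r^2)/?Q \<le> 2/3"
    using poly Q by (subst pos_divide_le_eq) auto
  then have "(A-B)*r/?Q + -B*(A-B)*r^2/?Q \<le> 2/3" unfolding add_divide_distrib .
  then have cond: "(A-B)*r/?Q \<le> 2/3 - \<bar>(1 - A*B*r^2)/?Q - 1\<bar>" unfolding ab by linarith
  show ?thesis by (rule pos[OF f r(1) r1 Br AB cond])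
qed

lemma case2:
  assumes Bm: "-1 \<le> B" and AB: "B < A" and A1: "A \<le> 1" and B0: "B \<le> 0"
  shows "SNe_radius (Janowski A B) = min 1 (2 / (3 * A - 5 * B))"
proof (rule radius_generic)
  have d: "0 < 3 * A - 5 * B" using B0 AB by linarith
  show "0 < 2 / (3 * A - 5 * B)" using d by simp
  fix f r assume "f \<in> Janowski A B" "0 < r" "r \<le> min 1 (2 / (3 * A - 5 * B))"
  then show "dilate f r \<in> SNe" using good2 assms by blast
next
  have d: "0 < 3 * A - 5 * B" using B0 AB by linarith
  fix r assume r: "2 / (3 * A - 5 * B) < r" "r \<le> 1"
  define \<rho> where "\<rho> = 2 / (3 * A - 5 * B)"
  have \<rho>: "0 < \<rho>" "\<rho> < r" "\<rho> * (3*A - 5*B) = 2" using d r unfolding \<rho>_def by (auto simp: field_simps)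
  have Bb: "\<bar>B\<bar> \<le> 1" using Bm B0 by simp
  obtain f where f: "f \<in> Janowski A B" "f holomorphic_on ball 0 1" "\<And>z. z \<in> ball 0 1 \<Longrightarrow> Qf f z = JJ A B z"
    using extremal[OF Bb] by blast
  have rp: "0 < r" using \<rho> by simp
  define z0 where "z0 = complex_of_real (\<rho> / r)"
  have "norm z0 = \<rho> / r" unfolding z0_def norm_of_real using \<rho> by simp
  then have z0: "z0 \<in> ball 0 1" using \<rho> by simp
  have rz: "complex_of_real r * z0 = of_real \<rho>" unfolding z0_def using rp by simp
  have rAB: "0 < \<rho> * (A - B)" using \<rho> AB by simp
  have Bp: "- (B * \<rho>) < 1" using \<rho>(3) rAB by (simp add: algebra_simps)
  have v: "(1 + A*\<rho>)/(1 + B*\<rho>) = 5/3"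
    using Bp \<rho>(3) by (simp add: field_simps)
  have "JJ A B (complex_of_real r * z0) = of_real (5/3)"
  proof -
    have j: "JJ A B (of_real \<rho>) = of_real ((1 + A*\<rho>)/(1 + B*\<rho>))"
      by (rule JJ_real) (use Bp in simp)
    show ?thesis unfolding rz j v ..
  qed
  from negative[OF f(2) f(3) rp r(2) z0 this] f(1) show "\<exists>f\<in>Janowski A B. dilate f r \<notin> SNe" by auto
qed

theorem mainTheorem2:
  shows "(\<forall>A B::real. 0 \<le> B \<and> B < A \<and> A \<le> 1 \<longrightarrow>
            SNe_radius (Janowski A B) = min 1 (2 / (3 * A - B)) \<and>
            (1 - B \<le> 3 * (1 - A) \<longrightarrow> Janowski A B \<subseteq> SNe))
       \<and> (\<forall>A B::real. -1 \<le> B \<and> B < A \<and> A \<le> 1 \<and> B \<le> 0 \<longrightarrow>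
            SNe_radius (Janowski A B) = min 1 (2 / (3 * A - 5 * B)) \<and>
            (3 * (1 + A) \<le> 5 * (1 + B) \<longrightarrow> Janowski A B \<subseteq> SNe))"
proof (intro conjI allI impI)
  fix A B :: real assume h: "0 \<le> B \<and> B < A \<and> A \<le> 1"
  then show "SNe_radius (Janowski A B) = min 1 (2 / (3 * A - B))" using case1 by blast
  assume c: "1 - B \<le> 3 * (1 - A)"
  have d: "0 < 3 * A - B" using h by linarith
  have "1 \<le> 2 / (3 * A - B)" using c d by (simp add: pos_le_divide_eq)
  then have m: "min 1 (2 / (3 * A - B)) = 1" by simp
  show "Janowski A B \<subseteq> SNe"
  proof
    fix f assume "f \<in> Janowski A B"
    from good1[OF _ _ _ this, of 1] h m show "f \<in> SNe" by (simp add: dilate_one)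
  qed
next
  fix A B :: real assume h: "-1 \<le> B \<and> B < A \<and> A \<le> 1 \<and> B \<le> 0"
  then show "SNe_radius (Janowski A B) = min 1 (2 / (3 * A - 5 * B))" using case2 by blast
  assume c: "3 * (1 + A) \<le> 5 * (1 + B)"
  have d: "0 < 3 * A - 5 * B" using h by linarith
  have "1 \<le> 2 / (3 * A - 5 * B)" using c d by (simp add: pos_le_divide_eq)
  then have m: "min 1 (2 / (3 * A - 5 * B)) = 1" by simp
  show "Janowski A B \<subseteq> SNe"
  proof
    fix f assume "f \<in> Janowski A B"
    from good2[OF _ _ _ _ this, of 1] h m show "f \<in> SNe" by (simp add: dilate_one)
  qed
qed

end
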